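(* Let $k_1,k_2,k_3\ge1$, let $G$ be the grid graph on $\{0,\dots,k_1\}\times\{0,\dots,k_2\}\times\{0,\dots,k_3\}$ (adjacency: differing by $1$ in exactly one coordinate), let $\mathcal B=\{B_1,\dots,B_m\}$ with $B_i=[a_i',a_i'']\times[b_i',b_i'']\times[c_i',c_i'']\subseteq\mathbb R^3$ boxes with integer endpoints $0\le a_i'<a_i''\le k_1$, $0\le b_i'<b_i''\le k_2$, $0\le c_i'<c_i''\le k_3$, and let $G_i$ be the subgraph of $G$ induced by the vertices in $B_i$. Let $\widetilde G$ be the graph with vertex set $V(G)\cup\{(u,i):1\le i\le m,\ u\in V(G_i)\}$ and edges: all edges of $G$; the edges $(u,i)(w,i)$ for $uw$ an edge of $G_i$; and the edges $u\,(u,i)$ for $u\in V(G_i)$. Let $\alpha=(0,0,0)$. Then $\chi(\Gamma(\widetilde G))\ge\chi(\Gamma_\alpha(\widetilde G))\ge\chi(\mathcal B)$.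
   Context: $\widetilde G$ is a median graph; $d$ is its graph distance. The Djoković–Winkler relation $\Theta$: $xy\,\Theta\,zw$ iff $d(x,z)+d(y,w)\ne d(x,w)+d(y,z)$, an equivalence relation on edges of a median graph. Two $\Theta$-classes cross if some 4-cycle has two opposite edges in one class and the other two in the other; they osculate if some edges $e$, $e'$, one from each class, share an endpoint and lie in no common 4-cycle. The contact graph $\Gamma(\widetilde G)$ has the $\Theta$-classes as vertices, distinct classes adjacent iff they cross or osculate. With edges directed from $x$ to $y$ iff $d(x,\alpha)<d(y,\alpha)$ (tail = origin), the pointed contact graph $\Gamma_\alpha(\widetilde G)$ has the same vertices, distinct classes adjacent iff they cross or osculate via two edges with a common origin. $\chi$ denotes chromatic number; $\chi(\mathcal B)$ is the chromatic number of the intersection graph of the boxes of $\mathcal B$ (boxes adjacent iff they intersect as subsets of $\mathbb R^3$). *)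

theory Defs
  imports Complex_Main
begin

definition gdist :: "('a \<Rightarrow> 'a \<Rightarrow> bool) \<Rightarrow> 'a \<Rightarrow> 'a \<Rightarrow> nat" where
  "gdist E x y = (LEAST n. \<exists>p. p 0 = x \<and> p n = y \<and> (\<forall>i<n. E (p i) (p (Suc i))))"

text \<open>Edges are ordered pairs (both orientations of an undirected edge occur).\<close>
definition gedges :: "('a \<Rightarrow> 'a \<Rightarrow> bool) \<Rightarrow> ('a \<times> 'a) set" where
  "gedges E = {(x, y). E x y}"

definition theta :: "('a \<Rightarrow> 'a \<Rightarrow> bool) \<Rightarrow> 'a \<times> 'a \<Rightarrow> 'a \<times> 'a \<Rightarrow> bool" where
  "theta E e f = (case e of (x, y) \<Rightarrow> case f of (z, w) \<Rightarrow>
      gdist E x z + gdist E y w \<noteq> gdist E x w + gdist E y z)"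

definition theta_class :: "('a \<Rightarrow> 'a \<Rightarrow> bool) \<Rightarrow> 'a \<times> 'a \<Rightarrow> ('a \<times> 'a) set" where
  "theta_class E e = {f \<in> gedges E. theta E e f}"

definition theta_classes :: "('a \<Rightarrow> 'a \<Rightarrow> bool) \<Rightarrow> ('a \<times> 'a) set set" where
  "theta_classes E = theta_class E ` gedges E"

definition cross :: "('a \<Rightarrow> 'a \<Rightarrow> bool) \<Rightarrow> ('a \<times> 'a) set \<Rightarrow> ('a \<times> 'a) set \<Rightarrow> bool" where
  "cross E C1 C2 = (\<exists>x1 x2 x3 x4. distinct [x1, x2, x3, x4] \<and>
      E x1 x2 \<and> E x2 x3 \<and> E x3 x4 \<and> E x4 x1 \<and>
      (x1, x2) \<in> C1 \<and> (x3, x4) \<in> C1 \<and> (x2, x3) \<in> C2 \<and> (x4, x1) \<in> C2)"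

definition common_square :: "('a \<Rightarrow> 'a \<Rightarrow> bool) \<Rightarrow> 'a \<Rightarrow> 'a \<Rightarrow> 'a \<Rightarrow> bool" where
  "common_square E u v w = (\<exists>x. distinct [u, v, x, w] \<and> E u v \<and> E v x \<and> E x w \<and> E w u)"

definition osculate :: "('a \<Rightarrow> 'a \<Rightarrow> bool) \<Rightarrow> ('a \<times> 'a) set \<Rightarrow> ('a \<times> 'a) set \<Rightarrow> bool" where
  "osculate E C1 C2 = (\<exists>u v w. (u, v) \<in> C1 \<and> (u, w) \<in> C2 \<and> E u v \<and> E u w \<and>
      \<not> common_square E u v w)"

definition osculate_pointed ::
  "('a \<Rightarrow> 'a \<Rightarrow> bool) \<Rightarrow> 'a \<Rightarrow> ('a \<times> 'a) set \<Rightarrow> ('a \<times> 'a) set \<Rightarrow> bool" where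
  "osculate_pointed E a C1 C2 = (\<exists>u v w. (u, v) \<in> C1 \<and> (u, w) \<in> C2 \<and> E u v \<and> E u w \<and>
      gdist E u a < gdist E v a \<and> gdist E u a < gdist E w a \<and>
      \<not> common_square E u v w)"

definition contact_adj :: "('a \<Rightarrow> 'a \<Rightarrow> bool) \<Rightarrow> ('a \<times> 'a) set \<Rightarrow> ('a \<times> 'a) set \<Rightarrow> bool" where
  "contact_adj E C1 C2 = (C1 \<noteq> C2 \<and> (cross E C1 C2 \<or> osculate E C1 C2))"

definition pointed_contact_adj ::
  "('a \<Rightarrow> 'a \<Rightarrow> bool) \<Rightarrow> 'a \<Rightarrow> ('a \<times> 'a) set \<Rightarrow> ('a \<times> 'a) set \<Rightarrow> bool" where
  "pointed_contact_adj E a C1 C2 = (C1 \<noteq> C2 \<and> (cross E C1 C2 \<or> osculate_pointed E a C1 C2))"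

definition chromatic :: "'v set \<Rightarrow> ('v \<Rightarrow> 'v \<Rightarrow> bool) \<Rightarrow> nat" where
  "chromatic V A = (LEAST k. \<exists>c :: 'v \<Rightarrow> nat. (\<forall>v\<in>V. c v < k) \<and>
      (\<forall>u\<in>V. \<forall>v\<in>V. A u v \<longrightarrow> c u \<noteq> c v))"

type_synonym pt = "int \<times> int \<times> int"

definition grid_adj :: "pt \<Rightarrow> pt \<Rightarrow> bool" where
  "grid_adj p q = (case p of (x1, y1, z1) \<Rightarrow> case q of (x2, y2, z2) \<Rightarrow>
      (\<bar>x1 - x2\<bar> = 1 \<and> y1 = y2 \<and> z1 = z2) \<or>
      (x1 = x2 \<and> \<bar>y1 - y2\<bar> = 1 \<and> z1 = z2) \<or>
      (x1 = x2 \<and> y1 = y2 \<and> \<bar>z1 - z2\<bar> = 1))"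

definition in_grid :: "int \<Rightarrow> int \<Rightarrow> int \<Rightarrow> pt \<Rightarrow> bool" where
  "in_grid k1 k2 k3 p = (case p of (x, y, z) \<Rightarrow>
      0 \<le> x \<and> x \<le> k1 \<and> 0 \<le> y \<and> y \<le> k2 \<and> 0 \<le> z \<and> z \<le> k3)"

definition in_box :: "(nat \<Rightarrow> int) \<Rightarrow> (nat \<Rightarrow> int) \<Rightarrow> (nat \<Rightarrow> int) \<Rightarrow> (nat \<Rightarrow> int) \<Rightarrow>
    (nat \<Rightarrow> int) \<Rightarrow> (nat \<Rightarrow> int) \<Rightarrow> nat \<Rightarrow> pt \<Rightarrow> bool" where
  "in_box a1 a2 b1 b2 c1 c2 i p = (case p of (x, y, z) \<Rightarrow>
      a1 i \<le> x \<and> x \<le> a2 i \<and> b1 i \<le> y \<and> y \<le> b2 i \<and> c1 i \<le> z \<and> z \<le> c2 i)"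

definition real_box :: "(nat \<Rightarrow> int) \<Rightarrow> (nat \<Rightarrow> int) \<Rightarrow> (nat \<Rightarrow> int) \<Rightarrow> (nat \<Rightarrow> int) \<Rightarrow>
    (nat \<Rightarrow> int) \<Rightarrow> (nat \<Rightarrow> int) \<Rightarrow> nat \<Rightarrow> (real \<times> real \<times> real) set" where
  "real_box a1 a2 b1 b2 c1 c2 i = {(x, y, z).
      of_int (a1 i) \<le> x \<and> x \<le> of_int (a2 i) \<and>
      of_int (b1 i) \<le> y \<and> y \<le> of_int (b2 i) \<and>
      of_int (c1 i) \<le> z \<and> z \<le> of_int (c2 i)}"

text \<open>Vertices of G-tilde: (u, 0) stands for u \<in> V(G), and (u, i) with 1 \<le> i \<le> m
  for the copy (u,i) of u \<in> V(G_i).\<close>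
definition Gt_adj :: "int \<Rightarrow> int \<Rightarrow> int \<Rightarrow> nat \<Rightarrow> (nat \<Rightarrow> int) \<Rightarrow> (nat \<Rightarrow> int) \<Rightarrow>
    (nat \<Rightarrow> int) \<Rightarrow> (nat \<Rightarrow> int) \<Rightarrow> (nat \<Rightarrow> int) \<Rightarrow> (nat \<Rightarrow> int) \<Rightarrow>
    pt \<times> nat \<Rightarrow> pt \<times> nat \<Rightarrow> bool" where
  "Gt_adj k1 k2 k3 m a1 a2 b1 b2 c1 c2 v w = (case v of (p, i) \<Rightarrow> case w of (q, j) \<Rightarrow>
      (i = 0 \<and> j = 0 \<and> in_grid k1 k2 k3 p \<and> in_grid k1 k2 k3 q \<and> grid_adj p q) \<or>
      (1 \<le> i \<and> i \<le> m \<and> j = i \<and> in_box a1 a2 b1 b2 c1 c2 i p \<and>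
         in_box a1 a2 b1 b2 c1 c2 i q \<and> grid_adj p q) \<or>
      (p = q \<and> i = 0 \<and> 1 \<le> j \<and> j \<le> m \<and> in_box a1 a2 b1 b2 c1 c2 j p) \<or>
      (p = q \<and> j = 0 \<and> 1 \<le> i \<and> i \<le> m \<and> in_box a1 a2 b1 b2 c1 c2 i p))"

end

theory Submission
  imports Defs
begin


definition walk :: "('a\<Rightarrow>'a\<Rightarrow>bool) \<Rightarrow> nat \<Rightarrow> 'a \<Rightarrow> 'a \<Rightarrow> bool" where
  "walk E n x y = (\<exists>p. p 0 = x \<and> p n = y \<and> (\<forall>i<n. E (p i) (p (Suc i))))"

lemma walk_refl: "walk E 0 x x"
  unfolding walk_def by (rule exI[of _ "\<lambda>_. x"]) simp

lemma walk_snoc: "walk E n x y \<Longrightarrow> E y z \<Longrightarrow> walk E (Suc n) x z"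
  unfolding walk_def
proof -
  assume "\<exists>p. p 0 = x \<and> p n = y \<and> (\<forall>i<n. E (p i) (p (Suc i)))" and e: "E y z"
  then obtain p where p: "p 0 = x" "p n = y" "\<forall>i<n. E (p i) (p (Suc i))" by blast
  show "\<exists>p. p 0 = x \<and> p (Suc n) = z \<and> (\<forall>i<Suc n. E (p i) (p (Suc i)))"
    apply (rule exI[of _ "p(Suc n := z)"])
    using p e by (auto simp: less_Suc_eq)
qed

lemma walk_cons: "E x y \<Longrightarrow> walk E n y z \<Longrightarrow> walk E (Suc n) x z"
  unfolding walk_def
proof -
  assume e: "E x y" and "\<exists>p. p 0 = y \<and> p n = z \<and> (\<forall>i<n. E (p i) (p (Suc i)))"
  then obtain p where p: "p 0 = y" "p n = z" "\<forall>i<n. E (p i) (p (Suc i))" by blast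
  show "\<exists>p. p 0 = x \<and> p (Suc n) = z \<and> (\<forall>i<Suc n. E (p i) (p (Suc i)))"
    apply (rule exI[of _ "\<lambda>k. if k = 0 then x else p (k - 1)"])
    using p e by (auto simp: less_Suc_eq_0_disj)
qed

lemma gdist_le: "walk E n x y \<Longrightarrow> gdist E x y \<le> n"
  unfolding gdist_def walk_def by (rule Least_le)

lemma gdist_walk: "walk E n x y \<Longrightarrow> walk E (gdist E x y) x y"
  unfolding gdist_def walk_def by (rule LeastI)

lemma lip_path:
  assumes "\<forall>i<n. E (p i) (p (Suc i))" "\<forall>v w. E v w \<longrightarrow> \<bar>f v - f w\<bar> \<le> (1::int)"
  shows "k \<le> n \<Longrightarrow> \<bar>f (p k) - f (p 0)\<bar> \<le> int k"
proof (induction k)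
  case 0 then show ?case by simp
next
  case (Suc k)
  then have "E (p k) (p (Suc k))" using assms(1) by simp
  then have "\<bar>f (p k) - f (p (Suc k))\<bar> \<le> 1" using assms(2) by blast
  with Suc show ?case by linarith
qed

lemma lip_bound:
  assumes "walk E n x y" "\<forall>v w. E v w \<longrightarrow> \<bar>f v - f w\<bar> \<le> (1::int)"
  shows "\<bar>f y - f x\<bar> \<le> int (gdist E x y)"
proof -
  from gdist_walk[OF assms(1)] obtain p where p: "p 0 = x" "p (gdist E x y) = y"
    "\<forall>i<gdist E x y. E (p i) (p (Suc i))" unfolding walk_def by blast
  from lip_path[OF p(3) assms(2), of "gdist E x y"] p show ?thesis by simp
qed

definition L1 :: "pt \<Rightarrow> pt \<Rightarrow> int" where
  "L1 p q = (case p of (x1,y1,z1) \<Rightarrow> case q of (x2,y2,z2) \<Rightarrow> \<bar>x1-x2\<bar>+\<bar>y1-y2\<bar>+\<bar>z1-z2\<bar>)"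

definition inb :: "int\<Rightarrow>int\<Rightarrow>int\<Rightarrow>int\<Rightarrow>int\<Rightarrow>int\<Rightarrow>pt\<Rightarrow>bool" where
  "inb l1 h1 l2 h2 l3 h3 p = (case p of (x,y,z) \<Rightarrow> l1 \<le> x \<and> x \<le> h1 \<and> l2 \<le> y \<and> y \<le> h2 \<and> l3 \<le> z \<and> z \<le> h3)"

lemma L1_sym: "L1 p q = L1 q p" by (auto simp: L1_def split: prod.splits)
lemma L1_self[simp]: "L1 p p = 0" by (auto simp: L1_def split: prod.splits)
lemma L1_nonneg: "L1 p q \<ge> 0" by (auto simp: L1_def split: prod.splits)

lemma grid_adj_L1: "grid_adj x y \<Longrightarrow> \<bar>L1 x p - L1 y p\<bar> \<le> 1"
  by (auto simp: grid_adj_def L1_def split: prod.splits)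

lemma step_closer:
  assumes "inb l1 h1 l2 h2 l3 h3 p" "inb l1 h1 l2 h2 l3 h3 q" "L1 p q > 0"
  shows "\<exists>q'. inb l1 h1 l2 h2 l3 h3 q' \<and> grid_adj q' q \<and> L1 p q' = L1 p q - 1"
proof -
  obtain x1 y1 z1 where P: "p = (x1,y1,z1)" by (cases p) auto
  obtain x2 y2 z2 where Q: "q = (x2,y2,z2)" by (cases q) auto
  note a = assms[unfolded P Q inb_def L1_def, simplified]
  consider "x1 < x2" | "x1 > x2" | "x1 = x2" "y1 < y2" | "x1 = x2" "y1 > y2"
    | "x1 = x2" "y1 = y2" "z1 < z2" | "x1 = x2" "y1 = y2" "z1 > z2"
    using a(3) by linarith
  then show ?thesis
  proof cases
    case 1 show ?thesis
      by (rule exI[of _ "(x2-1,y2,z2)"]) (use a 1 in \<open>auto simp: P Q inb_def L1_def grid_adj_def\<close>)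
  next
    case 2 show ?thesis
      by (rule exI[of _ "(x2+1,y2,z2)"]) (use a 2 in \<open>auto simp: P Q inb_def L1_def grid_adj_def\<close>)
  next
    case 3 show ?thesis
      by (rule exI[of _ "(x2,y2-1,z2)"]) (use a 3 in \<open>auto simp: P Q inb_def L1_def grid_adj_def\<close>)
  next
    case 4 show ?thesis
      by (rule exI[of _ "(x2,y2+1,z2)"]) (use a 4 in \<open>auto simp: P Q inb_def L1_def grid_adj_def\<close>)
  next
    case 5 show ?thesis
      by (rule exI[of _ "(x2,y2,z2-1)"]) (use a 5 in \<open>auto simp: P Q inb_def L1_def grid_adj_def\<close>)
  next
    case 6 show ?thesis
      by (rule exI[of _ "(x2,y2,z2+1)"]) (use a 6 in \<open>auto simp: P Q inb_def L1_def grid_adj_def\<close>)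
  qed
qed

lemma box_walk:
  fixes A :: "pt \<times> nat \<Rightarrow> pt \<times> nat \<Rightarrow> bool"
  assumes A: "\<And>p q. inb la ha lb hb lc hc p \<Longrightarrow> inb la ha lb hb lc hc q \<Longrightarrow> grid_adj p q \<Longrightarrow> A (p,k) (q,k)"
  shows "inb la ha lb hb lc hc p \<Longrightarrow> inb la ha lb hb lc hc q \<Longrightarrow> walk A (nat (L1 p q)) (p,k) (q,k)"
proof (induction "nat (L1 p q)" arbitrary: q)
  case 0
  then have "L1 p q = 0" using L1_nonneg[of p q] by linarith
  then have "p = q" by (auto simp: L1_def split: prod.splits)
  then show ?case using 0 walk_refl by (metis L1_self nat_zero_as_int)
next
  case (Suc n)
  then have "L1 p q > 0" by linarith
  from step_closer[OF Suc.prems this] obtain q' where q': "inb la ha lb hb lc hc q'"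
    "grid_adj q' q" "L1 p q' = L1 p q - 1" by blast
  then have "n = nat (L1 p q')" using Suc.hyps(2) by linarith
  from Suc.hyps(1)[OF this Suc.prems(1) q'(1)] have "walk A n (p,k) (q',k)" using \<open>n = _\<close> by simp
  from walk_snoc[OF this A[OF q'(1) Suc.prems(2) q'(2)]] show ?case using Suc.hyps(2) by simp
qed



locale setup5 =
  fixes k1 k2 k3 :: int and m :: nat and a1 a2 b1 b2 c1 c2 :: "nat \<Rightarrow> int"
  assumes k: "k1 \<ge> 1" "k2 \<ge> 1" "k3 \<ge> 1"
    and A: "\<forall>i\<in>{1..m}. 0 \<le> a1 i \<and> a1 i < a2 i \<and> a2 i \<le> k1"
    and B: "\<forall>i\<in>{1..m}. 0 \<le> b1 i \<and> b1 i < b2 i \<and> b2 i \<le> k2"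
    and C: "\<forall>i\<in>{1..m}. 0 \<le> c1 i \<and> c1 i < c2 i \<and> c2 i \<le> k3"
begin

abbreviation "E \<equiv> Gt_adj k1 k2 k3 m a1 a2 b1 b2 c1 c2"
abbreviation "ing \<equiv> in_grid k1 k2 k3"
abbreviation "inbx \<equiv> in_box a1 a2 b1 b2 c1 c2"

lemma ing_inb: "ing p = inb 0 k1 0 k2 0 k3 p"
  by (simp add: in_grid_def inb_def)
lemma inbx_inb: "inbx i p = inb (a1 i) (a2 i) (b1 i) (b2 i) (c1 i) (c2 i) p"
  by (simp add: in_box_def inb_def)

lemma box_grid: "1 \<le> i \<Longrightarrow> i \<le> m \<Longrightarrow> inbx i p \<Longrightarrow> ing p"
proof -
  assume i: "1 \<le> i" "i \<le> m" and b: "inbx i p"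
  obtain x y z where P: "p = (x,y,z)" by (cases p) auto
  have "0 \<le> a1 i \<and> a1 i < a2 i \<and> a2 i \<le> k1" "0 \<le> b1 i \<and> b1 i < b2 i \<and> b2 i \<le> k2"
    "0 \<le> c1 i \<and> c1 i < c2 i \<and> c2 i \<le> k3" using A B C i by auto
  with b show ?thesis unfolding P in_box_def in_grid_def prod.case by linarith
qed

lemma E_base: "ing p \<Longrightarrow> ing q \<Longrightarrow> grid_adj p q \<Longrightarrow> E (p,0) (q,0)"
  by (simp add: Gt_adj_def)
lemma E_copy: "1 \<le> i \<Longrightarrow> i \<le> m \<Longrightarrow> inbx i p \<Longrightarrow> inbx i q \<Longrightarrow> grid_adj p q \<Longrightarrow> E (p,i) (q,i)"
  by (simp add: Gt_adj_def)
lemma E_up: "1 \<le> i \<Longrightarrow> i \<le> m \<Longrightarrow> inbx i p \<Longrightarrow> E (p,0) (p,i)"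
  by (simp add: Gt_adj_def)
lemma E_down: "1 \<le> i \<Longrightarrow> i \<le> m \<Longrightarrow> inbx i p \<Longrightarrow> E (p,i) (p,0)"
  by (simp add: Gt_adj_def)

lemma E_grid: "E v w \<Longrightarrow> ing (fst v) \<and> snd v \<le> m"
proof -
  assume e: "E v w"
  obtain p i where v: "v = (p,i)" by (cases v) auto
  obtain q j where w: "w = (q,j)" by (cases w) auto
  from e have "i = 0 \<and> j = 0 \<and> ing p \<or> 1 \<le> i \<and> i \<le> m \<and> inbx i p \<or>
     i = 0 \<and> 1 \<le> j \<and> j \<le> m \<and> inbx j p"
    unfolding v w Gt_adj_def prod.case by blast
  then show ?thesis using box_grid[of i p] box_grid[of j p] by (auto simp: v)
qed

lemma lip:
  assumes "\<forall>k. \<bar>\<phi> 0 - \<phi> k\<bar> \<le> (1::int)"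
  shows "\<forall>v w. E v w \<longrightarrow> \<bar>(L1 (fst v) p0 + \<phi> (snd v)) - (L1 (fst w) p0 + \<phi> (snd w))\<bar> \<le> 1"
proof (intro allI impI)
  fix v w assume e: "E v w"
  obtain p i where v: "v = (p,i)" by (cases v) auto
  obtain q j where w: "w = (q,j)" by (cases w) auto
  from e consider "i = j" "grid_adj p q" | "p = q" "i = 0" | "p = q" "j = 0"
    unfolding v w Gt_adj_def prod.case by blast
  then show "\<bar>(L1 (fst v) p0 + \<phi> (snd v)) - (L1 (fst w) p0 + \<phi> (snd w))\<bar> \<le> 1"
  proof cases
    case 1 then show ?thesis using grid_adj_L1[of p q p0] by (simp add: v w)
  next
    case 2 then show ?thesis using assms by (simp add: v w)
  next
    case 3 then show ?thesis using assms[rule_format, of i] by (simp add: v w abs_minus_commute)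
  qed
qed

lemma walk_base: "ing p \<Longrightarrow> ing q \<Longrightarrow> walk E (nat (L1 p q)) (p,0) (q,0)"
  unfolding ing_inb by (rule box_walk[where la=0 and ha=k1 and lb=0 and hb=k2 and lc=0 and hc=k3])
    (auto simp: ing_inb[symmetric] intro: E_base)

lemma walk_copy: "1 \<le> i \<Longrightarrow> i \<le> m \<Longrightarrow> inbx i p \<Longrightarrow> inbx i q \<Longrightarrow> walk E (nat (L1 p q)) (p,i) (q,i)"
  unfolding inbx_inb by (rule box_walk[where la="a1 i" and ha="a2 i" and lb="b1 i" and hb="b2 i" and lc="c1 i" and hc="c2 i"])
    (auto simp: inbx_inb[symmetric] intro: E_copy)

lemma d00: assumes "ing p" "ing q" shows "int (gdist E (p,0) (q,0)) = L1 p q"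
proof -
  have w: "walk E (nat (L1 p q)) (p,0) (q,0)" by (rule walk_base[OF assms])
  have "\<bar>(L1 q p + 0) - (L1 p p + 0)\<bar> \<le> int (gdist E (p,0) (q,0))"
    using lip_bound[OF w lip[of "\<lambda>_. 0" p]] by simp
  then show ?thesis using gdist_le[OF w] L1_sym[of p q] L1_nonneg[of p q] by simp
qed

lemma dii: assumes "1 \<le> i" "i \<le> m" "inbx i p" "inbx i q" shows "int (gdist E (p,i) (q,i)) = L1 p q"
proof -
  have w: "walk E (nat (L1 p q)) (p,i) (q,i)" by (rule walk_copy[OF assms])
  have "\<bar>(L1 q p + 0) - (L1 p p + 0)\<bar> \<le> int (gdist E (p,i) (q,i))"
    using lip_bound[OF w lip[of "\<lambda>_. 0" p]] by simp
  then show ?thesis using gdist_le[OF w] L1_sym[of p q] L1_nonneg[of p q] by simp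
qed

lemma d0i: assumes "1 \<le> i" "i \<le> m" "ing p" "inbx i q" shows "int (gdist E (p,0) (q,i)) = L1 p q + 1"
proof -
  have w: "walk E (Suc (nat (L1 p q))) (p,0) (q,i)"
    by (rule walk_snoc[OF walk_base[OF assms(3) box_grid[OF assms(1,2,4)]] E_up[OF assms(1,2,4)]])
  have "\<bar>(L1 q p + (if i = 0 then 0 else 1)) - (L1 p p + (if (0::nat) = 0 then 0 else 1))\<bar> \<le> int (gdist E (p,0) (q,i))"
    using lip_bound[OF w lip[of "\<lambda>k. if k = 0 then 0 else 1" p]] assms(1) by simp
  then show ?thesis using gdist_le[OF w] L1_sym[of p q] L1_nonneg[of p q] assms(1) by simp
qed

lemma di0: assumes "1 \<le> i" "i \<le> m" "inbx i p" "ing q" shows "int (gdist E (p,i) (q,0)) = L1 p q + 1"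
proof -
  have w: "walk E (Suc (nat (L1 p q))) (p,i) (q,0)"
    by (rule walk_cons[OF E_down[OF assms(1,2,3)] walk_base[OF box_grid[OF assms(1,2,3)] assms(4)]])
  have "\<bar>(L1 q p + (if (0::nat) = 0 then 1 else 0)) - (L1 p p + (if i = 0 then 1 else 0))\<bar> \<le> int (gdist E (p,i) (q,0))"
    using lip_bound[OF w lip[of "\<lambda>k. if k = 0 then 1 else 0" p]] assms(1) by simp
  then show ?thesis using gdist_le[OF w] L1_sym[of p q] L1_nonneg[of p q] assms(1) by simp
qed

lemma dij: assumes "1 \<le> i" "i \<le> m" "1 \<le> j" "j \<le> m" "i \<noteq> j" "inbx i p" "inbx j q"
  shows "int (gdist E (p,i) (q,j)) = L1 p q + 2"
proof -
  have w: "walk E (Suc (Suc (nat (L1 p q)))) (p,i) (q,j)"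
    by (rule walk_snoc[OF walk_cons[OF E_down[OF assms(1,2,6)] walk_base[OF box_grid[OF assms(1,2,6)] box_grid[OF assms(3,4,7)]]] E_up[OF assms(3,4,7)]])
  let ?f = "\<lambda>k. if k = i then 0 else if k = 0 then 1 else (2::int)"
  have l: "\<forall>k. \<bar>?f 0 - ?f k\<bar> \<le> 1" using assms(1) by auto
  have "\<bar>(L1 q p + ?f j) - (L1 p p + ?f i)\<bar> \<le> int (gdist E (p,i) (q,j))"
    using lip_bound[OF w lip[OF l, of p]] by (simp only: fst_conv snd_conv)
  moreover have "?f j = 2" "?f i = 0" using assms by auto
  ultimately have "\<bar>L1 q p + 2\<bar> \<le> int (gdist E (p,i) (q,j))" by simp
  then show ?thesis using gdist_le[OF w] L1_sym[of p q] L1_nonneg[of p q] assms by simp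
qed

end


definition colorable :: "'v set \<Rightarrow> ('v \<Rightarrow> 'v \<Rightarrow> bool) \<Rightarrow> nat \<Rightarrow> bool" where
  "colorable V A k = (\<exists>c :: 'v \<Rightarrow> nat. (\<forall>v\<in>V. c v < k) \<and> (\<forall>u\<in>V. \<forall>v\<in>V. A u v \<longrightarrow> c u \<noteq> c v))"

lemma chrom_eq: "chromatic V A = (LEAST k. colorable V A k)"
  by (simp add: chromatic_def colorable_def)

lemma chrom_le:
  assumes "\<exists>k. colorable V' A' k" "\<And>k. colorable V' A' k \<Longrightarrow> colorable V A k"
  shows "chromatic V A \<le> chromatic V' A'"
proof -
  have "colorable V' A' (chromatic V' A')" unfolding chrom_eq using assms(1) by (metis LeastI)
  then have "colorable V A (chromatic V' A')" by (rule assms(2))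
  then show ?thesis unfolding chrom_eq by (rule Least_le)
qed

lemma finite_colorable:
  assumes "finite V" "\<And>v. \<not> A v v" shows "\<exists>k. colorable V A k"
proof -
  obtain h where h: "bij_betw h V {0..<card V}" using ex_bij_betw_finite_nat[OF assms(1)] by blast
  have "colorable V A (card V)" unfolding colorable_def
    apply (rule exI[of _ h])
    using h assms(2) unfolding bij_betw_def inj_on_def by auto
  then show ?thesis by blast
qed

context setup5 begin

definition "P i = (a1 i, b1 i, c1 i)"
definition "eI i = ((P i, 0), (P i, i))"
definition "Cl i = theta_class E (eI i)"

lemma P_box: assumes "1 \<le> i" "i \<le> m" shows "inbx i (P i)"
proof -
  have "a1 i < a2 i" "b1 i < b2 i" "c1 i < c2 i" using A B C assms by auto
  then show ?thesis by (simp add: P_def in_box_def)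
qed

lemma theta_u: assumes "1 \<le> i" "i \<le> m" "inbx i u" shows "theta E (eI i) ((u,0),(u,i))"
proof -
  have p: "inbx i (P i)" using P_box assms by auto
  have g: "ing (P i)" "ing u" using box_grid assms p by auto
  have "int (gdist E (P i,0) (u,0)) + int (gdist E (P i,i) (u,i)) \<noteq>
        int (gdist E (P i,0) (u,i)) + int (gdist E (P i,i) (u,0))"
    using d00[OF g] dii[OF assms(1,2) p assms(3)] d0i[OF assms(1,2) g(1) assms(3)]
      di0[OF assms(1,2) p g(2)] by simp
  then show ?thesis unfolding theta_def eI_def by simp
qed

lemma not_theta: assumes "1 \<le> i" "i \<le> m" "1 \<le> j" "j \<le> m" "i \<noteq> j"
  shows "\<not> theta E (eI j) (eI i)"
proof -
  have p: "inbx i (P i)" "inbx j (P j)" using P_box assms by auto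
  have g: "ing (P i)" "ing (P j)" using box_grid assms p by auto
  have "int (gdist E (P j,0) (P i,0)) + int (gdist E (P j,j) (P i,i)) =
        int (gdist E (P j,0) (P i,i)) + int (gdist E (P j,j) (P i,0))"
    using d00[OF g(2,1)] dij[OF assms(3,4,1,2) _ p(2,1)] assms(5) d0i[OF assms(1,2) g(2) p(1)]
      di0[OF assms(3,4) p(2) g(1)] by simp
  then show ?thesis unfolding theta_def eI_def by simp
qed

lemma Cl_mem: "1 \<le> i \<Longrightarrow> i \<le> m \<Longrightarrow> inbx i u \<Longrightarrow> ((u,0),(u,i)) \<in> Cl i"
  unfolding Cl_def theta_class_def gedges_def using theta_u E_up by auto

lemma Cl_neq: assumes "1 \<le> i" "i \<le> m" "1 \<le> j" "j \<le> m" "i \<noteq> j" shows "Cl i \<noteq> Cl j"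
proof
  assume "Cl i = Cl j"
  have "eI i \<in> Cl i" using Cl_mem[OF assms(1,2) P_box[OF assms(1,2)]] by (simp add: eI_def)
  then have "eI i \<in> Cl j" using \<open>Cl i = Cl j\<close> by simp
  then have "theta E (eI j) (eI i)" unfolding Cl_def theta_class_def by simp
  with not_theta[OF assms] show False by simp
qed

lemma Cl_in: "1 \<le> i \<Longrightarrow> i \<le> m \<Longrightarrow> Cl i \<in> theta_classes E"
  unfolding Cl_def theta_classes_def gedges_def eI_def using E_up P_box by auto

lemma E_from_copy: "1 \<le> i \<Longrightarrow> E (u,i) (q,l) \<Longrightarrow> l = i \<or> (q = u \<and> l = 0)"
  unfolding Gt_adj_def prod.case by (elim disjE; simp)
lemma E_to_copy: "1 \<le> j \<Longrightarrow> E (q,l) (u,j) \<Longrightarrow> l = j \<or> (q = u \<and> l = 0)"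
  unfolding Gt_adj_def prod.case by (elim disjE; simp)

lemma pointed: assumes "1 \<le> i" "i \<le> m" "1 \<le> j" "j \<le> m" "i \<noteq> j" "inbx i u" "inbx j u"
  shows "pointed_contact_adj E ((0,0,0),0) (Cl i) (Cl j)"
proof -
  have g: "ing u" "ing (0,0,0)" using box_grid assms k by (auto simp: in_grid_def)
  have "gdist E (u,0) ((0,0,0),0) < gdist E (u,i) ((0,0,0),0)"
    using d00[OF g] di0[OF assms(1,2,6) g(2)] by simp
  moreover have "gdist E (u,0) ((0,0,0),0) < gdist E (u,j) ((0,0,0),0)"
    using d00[OF g] di0[OF assms(3,4,7) g(2)] by simp
  moreover have "\<not> common_square E (u,0) (u,i) (u,j)"
  proof
    assume "common_square E (u,0) (u,i) (u,j)"
    then obtain x where x: "distinct [(u,0), (u,i), x, (u,j)]" "E (u,i) x" "E x (u,j)"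
      unfolding common_square_def by blast
    obtain q l where X: "x = (q,l)" by (cases x) auto
    from E_from_copy[OF assms(1) x(2)[unfolded X]] E_to_copy[OF assms(3) x(3)[unfolded X]]
      x(1) assms(5) show False by (auto simp: X)
  qed
  ultimately have "osculate_pointed E ((0,0,0),0) (Cl i) (Cl j)"
    unfolding osculate_pointed_def
    using Cl_mem[OF assms(1,2,6)] Cl_mem[OF assms(3,4,7)] E_up assms by blast
  then show ?thesis unfolding pointed_contact_adj_def using Cl_neq[OF assms(1-5)] by simp
qed

lemma E_grid2: "E v w \<Longrightarrow> ing (fst w) \<and> snd w \<le> m"
proof -
  assume e: "E v w"
  obtain p i where v: "v = (p,i)" by (cases v) auto
  obtain q j where w: "w = (q,j)" by (cases w) auto
  from e have "j = 0 \<and> i = 0 \<and> ing q \<or> 1 \<le> j \<and> j \<le> m \<and> inbx j q \<or>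
     j = 0 \<and> 1 \<le> i \<and> i \<le> m \<and> inbx i q"
    unfolding v w Gt_adj_def prod.case by blast
  then show ?thesis using box_grid[of i q] box_grid[of j q] by (auto simp: w)
qed

lemma fin: "finite (theta_classes E)"
proof -
  let ?S = "({0..k1} \<times> {0..k2} \<times> {0..k3}) \<times> {0..m}"
  have "gedges E \<subseteq> ?S \<times> ?S"
  proof
    fix e assume "e \<in> gedges E"
    then obtain v w where e: "e = (v,w)" "E v w" unfolding gedges_def by auto
    then have "ing (fst v) \<and> snd v \<le> m" "ing (fst w) \<and> snd w \<le> m" using E_grid E_grid2 by auto
    moreover have "(p,l) \<in> ?S" if "ing p \<and> l \<le> m" for p l
      using that by (cases p) (simp add: in_grid_def)
    ultimately have "(fst v, snd v) \<in> ?S" "(fst w, snd w) \<in> ?S" by blast+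
    then show "e \<in> ?S \<times> ?S" unfolding e by simp
  qed
  then have "finite (gedges E)" by (rule finite_subset) auto
  then show ?thesis unfolding theta_classes_def by simp
qed

lemma box_meet: assumes "1 \<le> i" "i \<le> m" "1 \<le> j" "j \<le> m"
  "real_box a1 a2 b1 b2 c1 c2 i \<inter> real_box a1 a2 b1 b2 c1 c2 j \<noteq> {}"
  shows "\<exists>u. inbx i u \<and> inbx j u"
proof -
  obtain x y z where xyz: "(x,y,z) \<in> real_box a1 a2 b1 b2 c1 c2 i" "(x,y,z) \<in> real_box a1 a2 b1 b2 c1 c2 j"
    using assms(5) by auto
  have r: "real_of_int (a1 i) \<le> of_int (a2 j)" "real_of_int (a1 j) \<le> of_int (a2 i)"
    "real_of_int (b1 i) \<le> of_int (b2 j)" "real_of_int (b1 j) \<le> of_int (b2 i)"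
    "real_of_int (c1 i) \<le> of_int (c2 j)" "real_of_int (c1 j) \<le> of_int (c2 i)"
    using xyz unfolding real_box_def by auto
  then have r': "a1 i \<le> a2 j" "a1 j \<le> a2 i" "b1 i \<le> b2 j" "b1 j \<le> b2 i" "c1 i \<le> c2 j" "c1 j \<le> c2 i"
    by linarith+
  have "0 \<le> a1 i \<and> a1 i < a2 i \<and> a2 i \<le> k1" "0 \<le> b1 i \<and> b1 i < b2 i \<and> b2 i \<le> k2"
    "0 \<le> c1 i \<and> c1 i < c2 i \<and> c2 i \<le> k3" "0 \<le> a1 j \<and> a1 j < a2 j \<and> a2 j \<le> k1" "0 \<le> b1 j \<and> b1 j < b2 j \<and> b2 j \<le> k2"
    "0 \<le> c1 j \<and> c1 j < c2 j \<and> c2 j \<le> k3" using A B C assms by auto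
  with r' show ?thesis
    by (intro exI[of _ "(max (a1 i) (a1 j), max (b1 i) (b1 j), max (c1 i) (c1 j))"]) (simp add: in_box_def)
qed

lemma main:
  "chromatic (theta_classes E) (contact_adj E) \<ge> chromatic (theta_classes E) (pointed_contact_adj E ((0,0,0),0))
   \<and> chromatic (theta_classes E) (pointed_contact_adj E ((0,0,0),0))
      \<ge> chromatic (real_box a1 a2 b1 b2 c1 c2 ` {1..m}) (\<lambda>B B'. B \<noteq> B' \<and> B \<inter> B' \<noteq> {})"
proof
  have ex1: "\<exists>k. colorable (theta_classes E) (contact_adj E) k"
    by (rule finite_colorable[OF fin]) (simp add: contact_adj_def)
  show "chromatic (theta_classes E) (contact_adj E) \<ge> chromatic (theta_classes E) (pointed_contact_adj E ((0,0,0),0))"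
  proof (rule chrom_le[OF ex1])
    fix k assume "colorable (theta_classes E) (contact_adj E) k"
    then obtain c where c: "\<forall>v\<in>theta_classes E. c v < k"
      "\<forall>u\<in>theta_classes E. \<forall>v\<in>theta_classes E. contact_adj E u v \<longrightarrow> c u \<noteq> c v"
      unfolding colorable_def by blast
    have sub: "contact_adj E u v" if "pointed_contact_adj E ((0,0,0),0) u v" for u v
      using that unfolding pointed_contact_adj_def contact_adj_def osculate_pointed_def osculate_def
      by blast
    show "colorable (theta_classes E) (pointed_contact_adj E ((0,0,0),0)) k"
      unfolding colorable_def using c sub by blast
  qed
next
  let ?V = "real_box a1 a2 b1 b2 c1 c2 ` {1..m}"
  have ex2: "\<exists>k. colorable (theta_classes E) (pointed_contact_adj E ((0,0,0),0)) k"
    by (rule finite_colorable[OF fin]) (simp add: pointed_contact_adj_def)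
  show "chromatic (theta_classes E) (pointed_contact_adj E ((0,0,0),0))
      \<ge> chromatic ?V (\<lambda>B B'. B \<noteq> B' \<and> B \<inter> B' \<noteq> {})"
  proof (rule chrom_le[OF ex2])
    fix k assume "colorable (theta_classes E) (pointed_contact_adj E ((0,0,0),0)) k"
    then obtain c where c: "\<forall>v\<in>theta_classes E. c v < k"
      "\<forall>u\<in>theta_classes E. \<forall>v\<in>theta_classes E. pointed_contact_adj E ((0,0,0),0) u v \<longrightarrow> c u \<noteq> c v"
      unfolding colorable_def by blast
    define idx where "idx B = (SOME i. i \<in> {1..m} \<and> real_box a1 a2 b1 b2 c1 c2 i = B)" for B
    have idx: "idx B \<in> {1..m} \<and> real_box a1 a2 b1 b2 c1 c2 (idx B) = B" if "B \<in> ?V" for B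
      unfolding idx_def by (rule someI_ex) (use that in auto)
    show "colorable ?V (\<lambda>B B'. B \<noteq> B' \<and> B \<inter> B' \<noteq> {}) k"
      unfolding colorable_def
    proof (intro exI[of _ "\<lambda>B. c (Cl (idx B))"] conjI ballI impI)
      fix B assume "B \<in> ?V"
      then show "c (Cl (idx B)) < k" using idx[of B] Cl_in c(1) by auto
    next
      fix B B' assume BB: "B \<in> ?V" "B' \<in> ?V" "B \<noteq> B' \<and> B \<inter> B' \<noteq> {}"
      have i1: "idx B \<in> {1..m}" "real_box a1 a2 b1 b2 c1 c2 (idx B) = B" using idx BB(1) by blast+
      have i2: "idx B' \<in> {1..m}" "real_box a1 a2 b1 b2 c1 c2 (idx B') = B'" using idx BB(2) by blast+
      have i3: "idx B \<noteq> idx B'"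
      proof
        assume "idx B = idx B'" then have "B = B'" using i1(2) i2(2) by metis
        with BB(3) show False by simp
      qed
      note i = i1(1) i2(1) i3
      obtain u where u: "inbx (idx B) u" "inbx (idx B') u"
        using box_meet[of "idx B" "idx B'"] i i1(2) i2(2) BB(3) by auto
      have "pointed_contact_adj E ((0,0,0),0) (Cl (idx B)) (Cl (idx B'))"
        using pointed[OF _ _ _ _ i(3) u] i by auto
      then show "c (Cl (idx B)) \<noteq> c (Cl (idx B'))" using c(2) Cl_in i by auto
    qed
  qed
qed

end

theorem lemma5:
  fixes k1 k2 k3 :: int and m :: nat
    and a1 a2 b1 b2 c1 c2 :: "nat \<Rightarrow> int"
  assumes "k1 \<ge> 1" and "k2 \<ge> 1" and "k3 \<ge> 1"
    and "\<forall>i\<in>{1..m}. 0 \<le> a1 i \<and> a1 i < a2 i \<and> a2 i \<le> k1"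
    and "\<forall>i\<in>{1..m}. 0 \<le> b1 i \<and> b1 i < b2 i \<and> b2 i \<le> k2"
    and "\<forall>i\<in>{1..m}. 0 \<le> c1 i \<and> c1 i < c2 i \<and> c2 i \<le> k3"
  defines "E \<equiv> Gt_adj k1 k2 k3 m a1 a2 b1 b2 c1 c2"
    and "\<alpha> \<equiv> ((0, 0, 0), 0)"
    and "Boxes \<equiv> real_box a1 a2 b1 b2 c1 c2 ` {1..m}"
  shows "chromatic (theta_classes E) (contact_adj E)
           \<ge> chromatic (theta_classes E) (pointed_contact_adj E \<alpha>)
       \<and> chromatic (theta_classes E) (pointed_contact_adj E \<alpha>)
           \<ge> chromatic Boxes (\<lambda>B B'. B \<noteq> B' \<and> B \<inter> B' \<noteq> {})"
proof -
  interpret setup5 k1 k2 k3 m a1 a2 b1 b2 c1 c2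
    by unfold_locales (use assms(1-6) in auto)
  show ?thesis unfolding E_def \<alpha>_def Boxes_def by (rule main)
qed

end
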